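(* Let $S$ be a nontrivial semiring, $\Sigma$ an alphabet, $L\in\mathrm{RevL}_1(\mathbb{B},\Sigma)$, and let $\underline{L}$ be the characteristic series of $L$ over $S$. Then $\underline{L}\in\mathrm{Rev}_1(S,\Sigma)$. As a consequence, $L\in\mathrm{RevL}_1(S,\Sigma)$ and $\mathrm{RevL}_1(\mathbb{B},\Sigma)\subseteq\mathrm{RevL}_1(S,\Sigma)$.
   Context: A semiring $(S,+,\cdot,0,1)$ has $(S,+,0)$ a commutative monoid, $(S,\cdot,1)$ a monoid, two-sided distributivity and $0$ absorbing; it is nontrivial if $0\neq1$. $\mathbb{B}=(\{0,1\},\lor,\land,0,1)$ is the Boolean semiring. A series over $S$ and a finite nonempty alphabet $\Sigma$ is a map $r\colon\Sigma^*\to S$, value $(r,w)$; its support is $\mathrm{supp}(r)=\{w\mid (r,w)\neq0\}$. The characteristic series $\underline{L}$ of $L\subseteq\Sigma^*$ over $S$ has $(\underline{L},w)=1$ for $w\in L$ and $0$ otherwise. A weighted automaton over $S$ and $\Sigma$ is $\mathcal{A}=(Q,\sigma,\iota,\tau)$ with $Q$ finite, $\sigma\colon Q\times\Sigma\times Q\to S$, $\iota,\tau\colon Q\to S$; a run on $w=a_1\cdots a_t$ is $q_0a_1q_1\cdots a_tq_t$ with all $\sigma(q_{k-1},a_k,q_k)\neq0$, of weight $\iota(q_0)\sigma(q_0,a_1,q_1)\cdots\sigma(q_{t-1},a_t,q_t)\tau(q_t)$, and $(\|\mathcal{A}\|,w)$ is the sum of weights of runs on $w$. $\mathcal{A}$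 is reversible if for all $p,p',q,q'\in Q$, $a\in\Sigma$: $\sigma(p,a,q)\neq0\neq\sigma(p,a,q')$ implies $q=q'$, and $\sigma(p,a,q)\neq0\neq\sigma(p',a,q)$ implies $p=p'$. $\mathrm{Rev}_1(S,\Sigma)$ is the set of series realised by reversible weighted automata over $S$ and $\Sigma$ with precisely one state $q$ such that $\iota(q)\neq0$, and $\mathrm{RevL}_1(S,\Sigma)=\{\mathrm{supp}(r)\mid r\in\mathrm{Rev}_1(S,\Sigma)\}$. In particular $\mathrm{RevL}_1(\mathbb{B},\Sigma)$ is the set of languages recognised by finite automata whose transition relation is deterministic and codeterministic, with exactly one initial state and arbitrary set of final states. *)

theory Defs
  imports Main
begin

datatype bsr = BZero | BOne

instantiation bsr :: semiring_1
begin
definition zero_bsr_def: "0 = BZero"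
definition one_bsr_def: "1 = BOne"
fun plus_bsr :: "bsr \<Rightarrow> bsr \<Rightarrow> bsr" where
  "plus_bsr BZero y = y"
| "plus_bsr BOne y = BOne"
fun times_bsr :: "bsr \<Rightarrow> bsr \<Rightarrow> bsr" where
  "times_bsr BZero y = BZero"
| "times_bsr BOne y = y"
instance
proof
  fix a b c :: bsr
  show "a + b + c = a + (b + c)" by (cases a; cases b; cases c) auto
  show "a + b = b + a" by (cases a; cases b) auto
  show "0 + a = a" by (simp add: zero_bsr_def)
  show "a * b * c = a * (b * c)" by (cases a; cases b; cases c) auto
  show "1 * a = a" by (simp add: one_bsr_def)
  show "a * 1 = a" by (cases a) (auto simp: one_bsr_def)
  show "(a + b) * c = a * c + b * c" by (cases a; cases b; cases c) auto
  show "a * (b + c) = a * b + a * c" by (cases a; cases b; cases c) auto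
  show "0 * a = 0" by (simp add: zero_bsr_def)
  show "a * 0 = 0" by (cases a) (auto simp: zero_bsr_def)
  show "(0::bsr) \<noteq> 1" by (simp add: zero_bsr_def one_bsr_def)
qed
end

text \<open>A weighted automaton over S and the alphabet Alph (Sigma in the paper) is given by a finite set
  of states Q (states are natural numbers), a transition weight function
  sigma :: Q x Alph x Q -> S, and initial/final weight functions iota, tau :: Q -> S.
  Values of these functions outside Q resp. Alph are irrelevant.\<close>

definition is_wa :: "nat set \<Rightarrow> 'c set \<Rightarrow> bool" where
  "is_wa Q Alph \<longleftrightarrow> finite Q"

definition runs :: "nat set \<Rightarrow> (nat \<Rightarrow> 'c \<Rightarrow> nat \<Rightarrow> 'a::semiring_1) \<Rightarrow> 'c list \<Rightarrow> nat list set" where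
  "runs Q \<sigma> w = {qs. length qs = Suc (length w) \<and> set qs \<subseteq> Q \<and>
      (\<forall>k < length w. \<sigma> (qs ! k) (w ! k) (qs ! Suc k) \<noteq> 0)}"

definition run_weight :: "(nat \<Rightarrow> 'c \<Rightarrow> nat \<Rightarrow> 'a::semiring_1) \<Rightarrow> (nat \<Rightarrow> 'a) \<Rightarrow> (nat \<Rightarrow> 'a)
    \<Rightarrow> 'c list \<Rightarrow> nat list \<Rightarrow> 'a" where
  "run_weight \<sigma> \<iota> \<tau> w qs =
     \<iota> (qs ! 0) * foldr (\<lambda>k acc. \<sigma> (qs ! k) (w ! k) (qs ! Suc k) * acc) [0..<length w]
        (\<tau> (qs ! length w))"

definition behaviour :: "nat set \<Rightarrow> (nat \<Rightarrow> 'c \<Rightarrow> nat \<Rightarrow> 'a::semiring_1) \<Rightarrow> (nat \<Rightarrow> 'a)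
    \<Rightarrow> (nat \<Rightarrow> 'a) \<Rightarrow> 'c list \<Rightarrow> 'a" where
  "behaviour Q \<sigma> \<iota> \<tau> w = (\<Sum>qs \<in> runs Q \<sigma> w. run_weight \<sigma> \<iota> \<tau> w qs)"

definition reversible :: "nat set \<Rightarrow> 'c set \<Rightarrow> (nat \<Rightarrow> 'c \<Rightarrow> nat \<Rightarrow> 'a::semiring_1) \<Rightarrow> bool" where
  "reversible Q Alph \<sigma> \<longleftrightarrow>
     (\<forall>p\<in>Q. \<forall>q\<in>Q. \<forall>q'\<in>Q. \<forall>a\<in>Alph. \<sigma> p a q \<noteq> 0 \<and> \<sigma> p a q' \<noteq> 0 \<longrightarrow> q = q') \<and>
     (\<forall>p\<in>Q. \<forall>p'\<in>Q. \<forall>q\<in>Q. \<forall>a\<in>Alph. \<sigma> p a q \<noteq> 0 \<and> \<sigma> p' a q \<noteq> 0 \<longrightarrow> p = p')"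

text \<open>A series over S and Alph is a map Alph^* -> S; we represent it as a function
  on all lists that is 0 outside Alph^* (= lists Alph).\<close>

definition is_series :: "'c set \<Rightarrow> ('c list \<Rightarrow> 'a::zero) \<Rightarrow> bool" where
  "is_series Alph r \<longleftrightarrow> (\<forall>w. w \<notin> lists Alph \<longrightarrow> r w = 0)"

definition supp :: "('c list \<Rightarrow> 'a::zero) \<Rightarrow> 'c list set" where
  "supp r = {w. r w \<noteq> 0}"

definition char_series :: "'c set \<Rightarrow> 'c list set \<Rightarrow> 'c list \<Rightarrow> 'a::semiring_1" where
  "char_series Alph L w = (if w \<in> lists Alph \<and> w \<in> L then 1 else 0)"

definition Rev1 :: "'c set \<Rightarrow> ('c list \<Rightarrow> 'a::semiring_1) set" where
  "Rev1 Alph = {r. is_series Alph r \<and>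
     (\<exists>Q \<sigma> \<iota> \<tau>. is_wa Q Alph \<and> reversible Q Alph \<sigma> \<and>
        (\<exists>!q. q \<in> Q \<and> \<iota> q \<noteq> 0) \<and>
        (\<forall>w \<in> lists Alph. r w = behaviour Q \<sigma> \<iota> \<tau> w))}"

definition RevL1 :: "'a::semiring_1 itself \<Rightarrow> 'c set \<Rightarrow> 'c list set set" where
  "RevL1 (_::'a itself) Alph = supp ` (Rev1 Alph :: ('c list \<Rightarrow> 'a) set)"

end

theory Submission
  imports Defs
begin

lemma fold_ones:
  "(\<forall>k<n. \<sigma> (qs!k) (w!k) (qs!Suc k) = (1::'a::semiring_1)) \<Longrightarrow>
   foldr (\<lambda>k acc. \<sigma> (qs!k) (w!k) (qs!Suc k) * acc) [0..<n] x = x"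
  by (induction n arbitrary: x) auto

lemma bsr_nz: "(x::bsr) \<noteq> 0 \<Longrightarrow> x = 1"
  by (cases x) (auto simp: zero_bsr_def one_bsr_def)

lemma bsr_mult_nz: "((a::bsr) * b \<noteq> 0) \<longleftrightarrow> a \<noteq> 0 \<and> b \<noteq> 0"
  by (cases a; cases b) (auto simp: zero_bsr_def one_bsr_def)

lemma bsr_plus_nz: "((a::bsr) + b \<noteq> 0) \<longleftrightarrow> a \<noteq> 0 \<or> b \<noteq> 0"
  by (cases a; cases b) (auto simp: zero_bsr_def one_bsr_def)

lemma bsr_sum_nz: "finite A \<Longrightarrow> (sum f A \<noteq> (0::bsr)) \<longleftrightarrow> (\<exists>x\<in>A. f x \<noteq> 0)"
  by (induction A rule: finite_induct) (auto simp: bsr_plus_nz)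

lemma runs_finite: "finite Q \<Longrightarrow> finite (runs Q \<sigma> w)"
proof -
  assume "finite Q"
  have "runs Q \<sigma> w \<subseteq> {qs. set qs \<subseteq> Q \<and> length qs = Suc (length w)}"
    by (auto simp: runs_def)
  moreover have "finite {qs. set qs \<subseteq> Q \<and> length qs = Suc (length w)}"
    using finite_lists_length_eq[OF \<open>finite Q\<close>] by simp
  ultimately show ?thesis by (rule finite_subset)
qed

lemma runs_det:
  assumes rev: "reversible Q Alph \<sigma>" and w: "w \<in> lists Alph"
    and r1: "qs \<in> runs Q \<sigma> w" and r2: "qs' \<in> runs Q \<sigma> w" and h: "qs!0 = qs'!0"
  shows "qs = qs'"
proof -
  have "\<forall>k. k \<le> length w \<longrightarrow> qs!k = qs'!k"
  proof
    fix k show "k \<le> length w \<longrightarrow> qs!k = qs'!k"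
    proof (induction k)
      case 0 then show ?case using h by simp
    next
      case (Suc k)
      show ?case
      proof
        assume k: "Suc k \<le> length w"
        then have e: "qs!k = qs'!k" using Suc by simp
        have a: "w!k \<in> Alph" using w k by (auto simp: in_lists_conv_set)
        have s1: "\<sigma> (qs!k) (w!k) (qs!Suc k) \<noteq> 0" and s2: "\<sigma> (qs'!k) (w!k) (qs'!Suc k) \<noteq> 0"
          using r1 r2 k by (auto simp: runs_def)
        have inQ: "qs!k \<in> Q" "qs!Suc k \<in> Q" "qs'!Suc k \<in> Q"
          using r1 r2 k by (auto simp: runs_def intro!: nth_mem[THEN subsetD[rotated]])
        show "qs!Suc k = qs'!Suc k"
          using rev inQ a s1 s2 e unfolding reversible_def by metis
      qed
    qed
  qed
  moreover have "length qs = length qs'" using r1 r2 by (simp add: runs_def)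
  ultimately show ?thesis using r1 by (auto simp: runs_def intro!: nth_equalityI)
qed

lemma main:
  assumes "L \<in> RevL1 TYPE(bsr) Alph"
  shows "(char_series Alph L :: 'c list \<Rightarrow> 'a::semiring_1) \<in> Rev1 Alph \<and> L \<in> RevL1 TYPE('a) Alph"
proof -
  obtain r :: "'c list \<Rightarrow> bsr" where rR: "r \<in> Rev1 Alph" and L: "L = supp r"
    using assms by (auto simp: RevL1_def)
  from rR obtain Q \<sigma> \<iota> \<tau> where ser: "is_series Alph r" and wa: "is_wa Q Alph"
    and rev: "reversible Q Alph \<sigma>" and ini: "\<exists>!q. q \<in> Q \<and> \<iota> q \<noteq> 0"
    and beh: "\<forall>w \<in> lists Alph. r w = behaviour Q \<sigma> \<iota> \<tau> w"
    using rR unfolding Rev1_def by blast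
  have fin: "finite Q" using wa by (simp add: is_wa_def)
  define P where "P w qs \<longleftrightarrow> \<iota> (qs!0) \<noteq> 0 \<and> \<tau> (qs!length w) \<noteq> 0" for w :: "'c list" and qs
  define \<sigma>' :: "nat \<Rightarrow> 'c \<Rightarrow> nat \<Rightarrow> 'a" where "\<sigma>' p a q = of_bool (\<sigma> p a q \<noteq> 0)" for p a q
  define \<iota>' :: "nat \<Rightarrow> 'a" where "\<iota>' q = of_bool (\<iota> q \<noteq> 0)" for q
  define \<tau>' :: "nat \<Rightarrow> 'a" where "\<tau>' q = of_bool (\<tau> q \<noteq> 0)" for q
  have runs_eq: "runs Q \<sigma>' w = runs Q \<sigma> w" for w
    by (simp add: runs_def \<sigma>'_def)
  have LA: "L \<subseteq> lists Alph" using ser L by (auto simp: is_series_def supp_def)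
  have memL: "w \<in> L \<longleftrightarrow> (\<exists>qs\<in>runs Q \<sigma> w. P w qs)" if w: "w \<in> lists Alph" for w
  proof -
    have "w \<in> L \<longleftrightarrow> behaviour Q \<sigma> \<iota> \<tau> w \<noteq> 0" using beh w L by (simp add: supp_def)
    also have "\<dots> \<longleftrightarrow> (\<exists>qs\<in>runs Q \<sigma> w. run_weight \<sigma> \<iota> \<tau> w qs \<noteq> 0)"
      unfolding behaviour_def by (rule bsr_sum_nz[OF runs_finite[OF fin]])
    also have "\<dots> \<longleftrightarrow> (\<exists>qs\<in>runs Q \<sigma> w. P w qs)"
    proof -
      have "run_weight \<sigma> \<iota> \<tau> w qs = \<iota> (qs!0) * \<tau> (qs!length w)" if "qs \<in> runs Q \<sigma> w" for qs
        using that unfolding run_weight_def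
        by (subst fold_ones) (auto simp: runs_def intro: bsr_nz)
      then show ?thesis by (auto simp: P_def bsr_mult_nz)
    qed
    finally show ?thesis .
  qed
  have bS: "behaviour Q \<sigma>' \<iota>' \<tau>' w = (if w \<in> L then 1 else 0)" if w: "w \<in> lists Alph" for w
  proof -
    have rw: "run_weight \<sigma>' \<iota>' \<tau>' w qs = of_bool (P w qs)" if "qs \<in> runs Q \<sigma> w" for qs
      using that unfolding run_weight_def
      by (subst fold_ones) (auto simp: runs_def \<sigma>'_def \<iota>'_def \<tau>'_def P_def)
    have "behaviour Q \<sigma>' \<iota>' \<tau>' w = (\<Sum>qs\<in>runs Q \<sigma> w. of_bool (P w qs))"
      unfolding behaviour_def runs_eq using rw by simp
    also have "\<dots> = of_nat (card (runs Q \<sigma> w \<inter> {qs. P w qs}))"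
      by (rule sum_of_bool_eq; rule runs_finite; rule fin)
    also have "card (runs Q \<sigma> w \<inter> {qs. P w qs}) = (if w \<in> L then 1 else 0)"
    proof (cases "w \<in> L")
      case True
      then obtain qs where qs: "qs \<in> runs Q \<sigma> w" "P w qs" using memL w by auto
      have "runs Q \<sigma> w \<inter> {qs. P w qs} = {qs}"
      proof safe
        fix qs' assume q': "qs' \<in> runs Q \<sigma> w" "P w qs'"
        have "qs!0 \<in> Q" "qs'!0 \<in> Q" using qs(1) q'(1) by (auto simp: runs_def)
        then have "qs!0 = qs'!0" using ini qs(2) q'(2) by (auto simp: P_def)
        then show "qs' = qs" using runs_det[OF rev w qs(1) q'(1)] by simp
      qed (use qs in auto)
      then show ?thesis using True by simp
    next
      case False
      then have "runs Q \<sigma> w \<inter> {qs. P w qs} = {}" using memL w by auto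
      then show ?thesis using False by simp
    qed
    finally show ?thesis by simp
  qed
  have rev': "reversible Q Alph \<sigma>'" using rev by (simp add: reversible_def \<sigma>'_def)
  have ini': "\<exists>!q. q \<in> Q \<and> \<iota>' q \<noteq> 0" using ini by (simp add: \<iota>'_def)
  have c1: "(char_series Alph L :: 'c list \<Rightarrow> 'a) \<in> Rev1 Alph"
    unfolding Rev1_def
  proof (intro CollectI conjI exI)
    show "is_series Alph (char_series Alph L :: 'c list \<Rightarrow> 'a)"
      by (simp add: is_series_def char_series_def)
    show "is_wa Q Alph" by fact
    show "reversible Q Alph \<sigma>'" by fact
    show "\<exists>!q. q \<in> Q \<and> \<iota>' q \<noteq> 0" by fact
    show "\<forall>w\<in>lists Alph. (char_series Alph L :: 'c list \<Rightarrow> 'a) w = behaviour Q \<sigma>' \<iota>' \<tau>' w"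
      using bS by (simp add: char_series_def)
  qed
  have "supp (char_series Alph L :: 'c list \<Rightarrow> 'a) = L"
    using LA by (auto simp: supp_def char_series_def)
  then have "L \<in> RevL1 TYPE('a) Alph" using c1 unfolding RevL1_def by (metis image_eqI)
  with c1 show ?thesis by simp
qed

theorem proposition3:
  fixes Alph :: "'c set" and L :: "'c list set"
  assumes "finite Alph" and "Alph \<noteq> {}"
    and "L \<in> RevL1 TYPE(bsr) Alph"
  shows "(char_series Alph L :: 'c list \<Rightarrow> 'a::semiring_1) \<in> Rev1 Alph
         \<and> L \<in> RevL1 TYPE('a) Alph
         \<and> RevL1 TYPE(bsr) Alph \<subseteq> RevL1 TYPE('a) Alph"
  using main[OF assms(3)] main[where 'a='a] by blast

end
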